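(* Let $p \in (0,\frac{1}{2})$, let $S=\{1,\dots,n\}$ and let $x,y \in S$ with $x<y$. Let $A$ be any (possibly randomized) algorithm. On a random instance, the probability that $A$ returns a permutation in which $x$ and $y$ appear in the wrong relative order is at least $\frac{1}{2}\left(\frac{p}{1-p}\right)^{2(y-x)-1}$.
   Context: A random instance consists of an input permutation of $S$ chosen uniformly at random together with comparison outcomes: for each pair $i<j$ independently, the comparison reports the wrong order with probability exactly $p$ and the correct order otherwise; outcomes are persistent (repeated comparisons of the same pair always return the same outcome). The algorithm accesses elements only via these comparisons and outputs a permutation of $S$. *)

theory Defs
  imports "HOL-Probability.Probability"
begin

text \<open>The ground set is S = {1..n}; element value v has true rank v.
  The hidden input order is a uniformly random permutation pi of {1..n}:
  the item at input position a (a in {1..n}) is the element pi a.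
  The algorithm only sees positions, and comparison outcomes between them.\<close>

definition pairs :: "nat \<Rightarrow> (nat \<times> nat) set" where
  "pairs n = {(i, j). 1 \<le> i \<and> i < j \<and> j \<le> n}"

text \<open>Noise: for each pair i < j of elements independently, flip i j = True
  (the comparison reports the wrong order) with probability exactly p.
  Outcomes are persistent since they are a fixed function of the pair.\<close>

definition noise_pmf :: "nat \<Rightarrow> real \<Rightarrow> (nat \<times> nat \<Rightarrow> bool) pmf" where
  "noise_pmf n p = Pi_pmf (pairs n) False (\<lambda>_. bernoulli_pmf p)"

definition input_pmf :: "nat \<Rightarrow> (nat \<Rightarrow> nat) pmf" where
  "input_pmf n = pmf_of_set {\<pi>. \<pi> permutes {1..n}}"

text \<open>Observed comparison between input positions a and b:
  True means "the comparison reports the item at a as smaller than the item at b".\<close>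

definition observed :: "nat \<Rightarrow> (nat \<Rightarrow> nat) \<Rightarrow> (nat \<times> nat \<Rightarrow> bool) \<Rightarrow> nat \<Rightarrow> nat \<Rightarrow> bool" where
  "observed n \<pi> flip a b =
     (a \<in> {1..n} \<and> b \<in> {1..n} \<and> a \<noteq> b \<and>
      (if \<pi> a < \<pi> b then \<not> flip (\<pi> a, \<pi> b) else flip (\<pi> b, \<pi> a)))"

definition wrong_order :: "nat list \<Rightarrow> nat \<Rightarrow> nat \<Rightarrow> bool" where
  "wrong_order xs x y = (\<exists>i j. i < j \<and> j < length xs \<and> xs ! i = y \<and> xs ! j = x)"

text \<open>A (possibly randomized) algorithm: since outcomes are persistent, any
  adaptive comparison-based algorithm's output distribution is a function of the
  full table of observed comparison outcomes between positions; it outputs an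
  ordering of the input positions (a list that is a permutation of {1..n}).\<close>

definition error_prob ::
  "nat \<Rightarrow> real \<Rightarrow> ((nat \<Rightarrow> nat \<Rightarrow> bool) \<Rightarrow> nat list pmf) \<Rightarrow> nat \<Rightarrow> nat \<Rightarrow> real" where
  "error_prob n p A x y =
     measure_pmf.prob
       (do { \<pi> \<leftarrow> input_pmf n;
             flip \<leftarrow> noise_pmf n p;
             out \<leftarrow> A (observed n \<pi> flip);
             return_pmf (wrong_order (map \<pi> out) x y) })
       {True}"

end

theory Submission
  imports Defs
begin

lemma wrong_order_idx:
  assumes "distinct xs" "i < length xs" "j < length xs" "xs ! i = x" "xs ! j = y" "x \<noteq> y"
  shows "wrong_order xs x y \<longleftrightarrow> j < i"
proof
  assume "wrong_order xs x y"
  then obtain i' j' where h: "i' < j'" "j' < length xs" "xs ! i' = y" "xs ! j' = x"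
    unfolding wrong_order_def by blast
  have "i' = j" using h assms nth_eq_iff_index_eq[OF assms(1)] by (metis order.strict_trans)
  moreover have "j' = i" using h assms nth_eq_iff_index_eq[OF assms(1)] by metis
  ultimately show "j < i" using h by simp
next
  assume "j < i" then show "wrong_order xs x y" unfolding wrong_order_def using assms by blast
qed

lemma wrong_swap:
  assumes "distinct xs" "x \<in> set xs" "y \<in> set xs" "x \<noteq> y"
  shows "wrong_order (map (Transposition.transpose x y) xs) x y \<longleftrightarrow> \<not> wrong_order xs x y"
proof -
  obtain i where i: "i < length xs" "xs ! i = x" using assms(2) by (metis in_set_conv_nth)
  obtain j where j: "j < length xs" "xs ! j = y" using assms(3) by (metis in_set_conv_nth)
  have ij: "i \<noteq> j" using i j assms by auto
  have d: "distinct (map (Transposition.transpose x y) xs)" using assms(1)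
    by (simp add: distinct_map inj_on_def) (metis Transposition.transpose_involutory)
  have "wrong_order (map (Transposition.transpose x y) xs) x y \<longleftrightarrow> i < j"
    by (rule wrong_order_idx[OF d]) (use i j assms in auto)
  moreover have "wrong_order xs x y \<longleftrightarrow> j < i"
    by (rule wrong_order_idx) (use i j assms in auto)
  ultimately show ?thesis using ij by auto
qed

definition sig :: "nat \<Rightarrow> nat \<Rightarrow> nat \<times> nat \<Rightarrow> nat \<times> nat" where
  "sig x y q = (if Transposition.transpose x y (fst q) < Transposition.transpose x y (snd q)
     then (Transposition.transpose x y (fst q), Transposition.transpose x y (snd q))
     else (Transposition.transpose x y (snd q), Transposition.transpose x y (fst q)))"

definition flp :: "nat \<Rightarrow> nat \<Rightarrow> nat \<times> nat \<Rightarrow> bool" where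
  "flp x y q = (Transposition.transpose x y (snd q) < Transposition.transpose x y (fst q))"

definition Gf :: "nat \<Rightarrow> nat \<Rightarrow> nat \<Rightarrow> (nat \<times> nat \<Rightarrow> bool) \<Rightarrow> (nat \<times> nat \<Rightarrow> bool)" where
  "Gf n x y f = (\<lambda>q. q \<in> pairs n \<and> (f (sig x y q) \<noteq> flp x y q))"

lemma tr_in: "x \<in> {1..n} \<Longrightarrow> y \<in> {1..n} \<Longrightarrow> u \<in> {1..n} \<Longrightarrow> Transposition.transpose x y u \<in> {1..n}"
  by (auto simp: Transposition.transpose_def)

lemma obs_core:
  assumes "x \<in> {1..n}" "y \<in> {1..n}" "u \<in> {1..n}" "v \<in> {1..n}" "u \<noteq> v"
  shows "(if Transposition.transpose x y u < Transposition.transpose x y v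
           then \<not> Gf n x y f (Transposition.transpose x y u, Transposition.transpose x y v)
           else Gf n x y f (Transposition.transpose x y v, Transposition.transpose x y u))
       = (if u < v then \<not> f (u, v) else f (v, u))"
proof -
  let ?t = "Transposition.transpose x y"
  have i: "?t u \<in> {1..n}" "?t v \<in> {1..n}" using tr_in[OF assms(1,2)] assms(3,4) by blast+
  have ne: "?t u \<noteq> ?t v" using assms(5) by (metis Transposition.transpose_involutory)
  show ?thesis
  proof (cases "?t u < ?t v")
    case True
    then show ?thesis using i assms(5) by (auto simp: Gf_def sig_def flp_def pairs_def)
  next
    case False
    then have "?t v < ?t u" using ne by simp
    then show ?thesis using i False assms(5) by (auto simp: Gf_def sig_def flp_def pairs_def)
  qed
qed

lemma observed_G:
  assumes "x \<in> {1..n}" "y \<in> {1..n}" "\<pi> permutes {1..n}"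
  shows "observed n (Transposition.transpose x y \<circ> \<pi>) (Gf n x y f) = observed n \<pi> f"
proof (intro ext)
  fix a b
  show "observed n (Transposition.transpose x y \<circ> \<pi>) (Gf n x y f) a b = observed n \<pi> f a b"
  proof (cases "a \<in> {1..n} \<and> b \<in> {1..n} \<and> a \<noteq> b")
    case True
    then have "\<pi> a \<in> {1..n}" "\<pi> b \<in> {1..n}" "\<pi> a \<noteq> \<pi> b"
      using True permutes_in_image[OF assms(3)] permutes_inj[OF assms(3)]
      by (simp_all add: inj_eq del: atLeastAtMost_iff)
    note h = obs_core[OF assms(1,2) this, of f]
    from True have t1: "a \<in> {1..n}" "b \<in> {1..n}" "a \<noteq> b" by auto
    show ?thesis unfolding observed_def comp_def
      by (simp only: h t1 simp_thms)
  next
    case False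
    then show ?thesis unfolding observed_def by auto
  qed
qed


lemma finite_pairs: "finite (pairs n)"
  by (rule finite_subset[of _ "{1..n} \<times> {1..n}"]) (auto simp: pairs_def)

lemma sig_props:
  assumes "x \<in> {1..n}" "y \<in> {1..n}" "q \<in> pairs n"
  shows "sig x y q \<in> pairs n \<and> sig x y (sig x y q) = q \<and> flp x y (sig x y q) = flp x y q"
proof -
  obtain s t where q: "q = (s, t)" "1 \<le> s" "s < t" "t \<le> n" using assms(3) by (auto simp: pairs_def)
  let ?t = "Transposition.transpose x y"
  have i: "?t s \<in> {1..n}" "?t t \<in> {1..n}" using tr_in[OF assms(1,2)] q by auto
  have ne: "?t s \<noteq> ?t t" using q by (metis Transposition.transpose_involutory less_irrefl)
  show ?thesis
  proof (cases "?t s < ?t t")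
    case True
    then show ?thesis using i q by (auto simp: sig_def flp_def pairs_def)
  next
    case False
    then have "?t t < ?t s" using ne by simp
    then show ?thesis using i q False by (auto simp: sig_def flp_def pairs_def)
  qed
qed

lemma Gf_inv:
  assumes "x \<in> {1..n}" "y \<in> {1..n}" "\<forall>z. z \<notin> pairs n \<longrightarrow> \<not> f z"
  shows "Gf n x y (Gf n x y f) = f"
proof
  fix q
  show "Gf n x y (Gf n x y f) q = f q"
  proof (cases "q \<in> pairs n")
    case True
    from sig_props[OF assms(1,2) True] show ?thesis using True by (auto simp: Gf_def)
  next
    case False
    moreover have "\<not> f q" using assms(3) False by blast
    ultimately show ?thesis by (simp add: Gf_def)
  qed
qed

lemma card_flp:
  assumes "x < y"
  shows "card {q \<in> pairs n. flp x y q} \<le> 2 * (y - x) - 1"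
proof -
  have sub: "{q \<in> pairs n. flp x y q} \<subseteq> {(x,y)} \<union> ((\<lambda>z. (x,z)) ` {x<..<y} \<union> (\<lambda>z. (z,y)) ` {x<..<y})"
    using assms by (auto simp: pairs_def flp_def Transposition.transpose_def split: if_splits)
  have "card {q \<in> pairs n. flp x y q} \<le> card ({(x,y)} \<union> ((\<lambda>z. (x,z)) ` {x<..<y} \<union> (\<lambda>z. (z,y)) ` {x<..<y}))"
    by (rule card_mono[OF _ sub]) auto
  also have "\<dots> \<le> card {(x,y)} + (card ((\<lambda>z. (x,z)) ` {x<..<y}) + card ((\<lambda>z. (z,y)) ` {x<..<y}))"
    by (meson add_left_mono card_Un_le order_trans)
  also have "\<dots> \<le> 1 + (card {x<..<y} + card {x<..<y})"
    by (intro add_mono card_image_le) auto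
  also have "\<dots> = 2 * (y - x) - 1" using assms by simp
  finally show ?thesis .
qed


lemma weight:
  assumes p: "0 < p" "p < 1/2" and xy: "x \<in> {1..n}" "y \<in> {1..n}" "x < y"
    and f: "\<forall>z. z \<notin> pairs n \<longrightarrow> \<not> f z"
  shows "pmf (noise_pmf n p) (Gf n x y f) \<ge> (p/(1-p)) ^ (2*(y-x)-1) * pmf (noise_pmf n p) f"
proof -
  define b where "b = (\<lambda>c. pmf (bernoulli_pmf p) c)"
  define r where "r = p / (1 - p)"
  define D where "D = {q \<in> pairs n. flp x y q}"
  have bT: "b True = p" and bF: "b False = 1 - p" using p by (auto simp: b_def)
  have r0: "0 \<le> r" and r1: "r \<le> 1" using p by (auto simp: r_def)
  have W: "pmf (noise_pmf n p) g = (\<Prod>q\<in>pairs n. b (g q))" if "\<forall>z. z \<notin> pairs n \<longrightarrow> \<not> g z" for g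
    unfolding noise_pmf_def b_def by (rule pmf_Pi') (use that finite_pairs in auto)
  have GF: "\<forall>z. z \<notin> pairs n \<longrightarrow> \<not> Gf n x y f z" by (simp add: Gf_def)
  have pp: "p * p \<le> (1 - p) * (1 - p)" using p by (intro mult_mono) auto
  have key: "r * p \<le> 1 - p" using p pp unfolding r_def
    by (simp add: field_simps)
  have rp: "r * (1 - p) = p" using p unfolding r_def by (simp add: field_simps)
  have fac: "(if flp x y q then r else 1) * b (f (sig x y q)) \<le> b (Gf n x y f q)"
    if "q \<in> pairs n" for q
    using that key rp bT bF by (cases "flp x y q"; cases "f (sig x y q)") (auto simp: Gf_def)
  have nn: "0 \<le> (if flp x y q then r else 1) * b (f (sig x y q))" for q
    using r0 by (simp add: b_def)
  have "(\<Prod>q\<in>pairs n. (if flp x y q then r else 1) * b (f (sig x y q))) \<le> (\<Prod>q\<in>pairs n. b (Gf n x y f q))"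
    by (rule prod_mono) (use fac nn in auto)
  moreover have "(\<Prod>q\<in>pairs n. (if flp x y q then r else 1) * b (f (sig x y q)))
      = (\<Prod>q\<in>pairs n. (if flp x y q then r else 1)) * (\<Prod>q\<in>pairs n. b (f (sig x y q)))"
    by (rule prod.distrib)
  moreover have "(\<Prod>q\<in>pairs n. b (f (sig x y q))) = (\<Prod>q\<in>pairs n. b (f q))"
    by (rule prod.reindex_bij_witness[of _ "sig x y" "sig x y"]) (use sig_props[OF xy(1,2)] in auto)
  moreover have "(\<Prod>q\<in>pairs n. (if flp x y q then r else 1)) = r ^ card D"
  proof -
    have "(\<Prod>q\<in>pairs n. (if flp x y q then r else 1)) = (\<Prod>q\<in>D. r)"
      unfolding D_def by (rule prod.mono_neutral_cong_right) (use finite_pairs in auto)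
    then show ?thesis by simp
  qed
  moreover have "r ^ (2*(y-x)-1) \<le> r ^ card D"
    by (rule power_decreasing) (use card_flp[OF xy(3), of n] r0 r1 D_def in auto)
  moreover have "0 \<le> (\<Prod>q\<in>pairs n. b (f q))" by (simp add: b_def prod_nonneg)
  ultimately have "r ^ (2*(y-x)-1) * (\<Prod>q\<in>pairs n. b (f q)) \<le> (\<Prod>q\<in>pairs n. b (Gf n x y f q))"
    by (metis (no_types, lifting) mult_right_mono order_trans)
  then show ?thesis using W[OF f] W[OF GF] by (simp add: r_def)
qed


lemma compl_bind:
  assumes "\<And>w. w \<in> set_pmf M \<Longrightarrow> h2 w = (\<not> h1 w)"
  shows "pmf (M \<bind> (\<lambda>w. return_pmf (h2 w))) True = 1 - pmf (M \<bind> (\<lambda>w. return_pmf (h1 w))) True"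
proof -
  have eq: "map_pmf h2 M = map_pmf Not (map_pmf h1 M)"
  proof -
    have "map_pmf Not (map_pmf h1 M) = map_pmf (Not \<circ> h1) M" by (simp add: pmf.map_comp)
    moreover have "map_pmf h2 M = map_pmf (Not \<circ> h1) M" by (rule map_pmf_cong) (use assms in auto)
    ultimately show ?thesis by simp
  qed
  have "pmf (map_pmf Not (map_pmf h1 M)) (Not False) = pmf (map_pmf h1 M) False"
    by (rule pmf_map_inj') (auto simp: inj_def)
  moreover have "pmf (map_pmf h1 M) True + pmf (map_pmf h1 M) False = 1"
  proof -
    have "(\<Sum>b\<in>(UNIV :: bool set). pmf (map_pmf h1 M) b) = 1" by (rule sum_pmf_eq_1) auto
    then show ?thesis by (simp add: UNIV_bool add.commute)
  qed
  ultimately show ?thesis unfolding map_pmf_def[symmetric] using eq by simp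
qed

theorem lemma6p1:
  fixes n x y :: nat and p :: real
    and A :: "(nat \<Rightarrow> nat \<Rightarrow> bool) \<Rightarrow> nat list pmf"
  assumes "0 < p" and "p < 1/2"
    and "x \<in> {1..n}" and "y \<in> {1..n}" and "x < y"
    and "\<And>T out. out \<in> set_pmf (A T) \<Longrightarrow> distinct out \<and> set out = {1..n}"
  shows "error_prob n p A x y \<ge> (1/2) * (p / (1 - p)) ^ (2 * (y - x) - 1)"
proof -
  note p = assms(1,2) and xy = assms(3,4,5) and Aok = assms(6)
  define P where "P = {\<pi>. \<pi> permutes {1..n}}"
  define F where "F = {f. \<forall>z. z \<notin> pairs n \<longrightarrow> \<not> f z}"
  define \<tau> where "\<tau> = Transposition.transpose x y"
  define E where "E = (\<lambda>\<pi> f. pmf (A (observed n \<pi> f) \<bind> (\<lambda>out. return_pmf (wrong_order (map \<pi> out) x y))) True)"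
  define c where "c = (\<lambda>\<pi>. pmf (input_pmf n) \<pi>)"
  define W where "W = (\<lambda>f. pmf (noise_pmf n p) f)"
  define r where "r = (p / (1 - p)) ^ (2 * (y - x) - 1)"
  define err where "err = error_prob n p A x y"
  have finP: "finite P" unfolding P_def by (rule finite_permutations) simp
  have neP: "P \<noteq> {}" unfolding P_def using permutes_id by blast
  have finF: "finite F"
  proof (rule finite_subset[of F "(\<lambda>S z. z \<in> S) ` Pow (pairs n)"])
    show "F \<subseteq> (\<lambda>S z. z \<in> S) ` Pow (pairs n)"
    proof
      fix f assume "f \<in> F"
      then have "f = (\<lambda>z. z \<in> {z \<in> pairs n. f z})" unfolding F_def by blast
      then show "f \<in> (\<lambda>S z. z \<in> S) ` Pow (pairs n)" by blast
    qed
  qed (use finite_pairs in auto)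
  have setI: "set_pmf (input_pmf n) \<subseteq> P" unfolding input_pmf_def P_def
    using finP neP P_def by simp
  have setN: "set_pmf (noise_pmf n p) \<subseteq> F"
  proof
    fix f assume "f \<in> set_pmf (noise_pmf n p)"
    then have "pmf (noise_pmf n p) f \<noteq> 0" by (simp add: set_pmf_iff)
    then have h: "\<forall>z. z \<notin> pairs n \<longrightarrow> f z = False"
      using pmf_Pi[OF finite_pairs, of n False "\<lambda>_. bernoulli_pmf p" f] unfolding noise_pmf_def
      by (metis (no_types, lifting))
    then show "f \<in> F" unfolding F_def by blast
  qed
  have tauP: "\<tau> \<circ> \<pi> \<in> P" if "\<pi> \<in> P" for \<pi>
    using permutes_compose[OF _ permutes_swap_id[OF xy(1) xy(2)], of \<pi>] that unfolding P_def \<tau>_def by simp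
  have cP: "c (\<tau> \<circ> \<pi>) = c \<pi>" if "\<pi> \<in> P" for \<pi>
  proof -
    have "\<tau> \<circ> \<pi> \<in> P" using tauP that by blast
    then show ?thesis using that finP neP unfolding c_def input_pmf_def P_def by simp
  qed
  have expand: "err = (\<Sum>\<pi>\<in>P. \<Sum>f\<in>F. c \<pi> * W f * E \<pi> f)"
  proof -
    have inner: "pmf (noise_pmf n p \<bind> (\<lambda>f. A (observed n \<pi> f) \<bind> (\<lambda>out. return_pmf (wrong_order (map \<pi> out) x y)))) True
        = (\<Sum>f\<in>F. W f * E \<pi> f)" for \<pi>
      unfolding pmf_bind W_def E_def
      by (subst integral_measure_pmf[OF finF]) (use setN in auto)
    have "err = pmf (input_pmf n \<bind> (\<lambda>\<pi>. noise_pmf n p \<bind> (\<lambda>f. A (observed n \<pi> f) \<bind> (\<lambda>out. return_pmf (wrong_order (map \<pi> out) x y))))) True"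
      unfolding err_def error_prob_def by (simp add: measure_pmf_single)
    also have "\<dots> = (\<Sum>\<pi>\<in>P. c \<pi> * (\<Sum>f\<in>F. W f * E \<pi> f))"
      unfolding pmf_bind[of "input_pmf n"] inner c_def
      by (subst integral_measure_pmf[OF finP]) (use setI in auto)
    finally show ?thesis by (simp add: sum_distrib_left mult.assoc)
  qed
  have tot: "(\<Sum>\<pi>\<in>P. \<Sum>f\<in>F. c \<pi> * W f) = 1"
  proof -
    have "(\<Sum>\<pi>\<in>P. \<Sum>f\<in>F. c \<pi> * W f) = (\<Sum>\<pi>\<in>P. c \<pi> * (\<Sum>f\<in>F. W f))" by (simp add: sum_distrib_left)
    also have "\<dots> = (\<Sum>\<pi>\<in>P. c \<pi>)" using sum_pmf_eq_1[OF finF setN] by (simp add: W_def)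
    also have "\<dots> = 1" using sum_pmf_eq_1[OF finP setI] by (simp add: c_def)
    finally show ?thesis .
  qed
  have compl: "E (\<tau> \<circ> \<pi>) (Gf n x y f) = 1 - E \<pi> f" if "\<pi> \<in> P" "f \<in> F" for \<pi> f
  proof -
    have perm: "\<pi> permutes {1..n}" using that P_def by simp
    have obs: "observed n (\<tau> \<circ> \<pi>) (Gf n x y f) = observed n \<pi> f"
      unfolding \<tau>_def by (rule observed_G[OF xy(1,2) perm])
    show ?thesis unfolding E_def obs
    proof (rule compl_bind)
      fix out assume "out \<in> set_pmf (A (observed n \<pi> f))"
      then have o: "distinct out" "set out = {1..n}" using Aok by auto
      have d: "distinct (map \<pi> out)" using o perm by (simp add: distinct_map permutes_inj_on[OF perm])
      have s: "set (map \<pi> out) = {1..n}" using o perm by (simp add: permutes_image)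
      show "wrong_order (map (\<tau> \<circ> \<pi>) out) x y = (\<not> wrong_order (map \<pi> out) x y)"
        unfolding \<tau>_def map_map[symmetric] by (rule wrong_swap[OF d]) (use s xy in auto)
    qed
  qed
  have Wge: "W (Gf n x y f) \<ge> r * W f" if "f \<in> F" for f
    using weight[OF p xy, of f] that unfolding W_def r_def F_def by simp
  have q0: "0 \<le> p / (1 - p)" and q1: "p / (1 - p) \<le> 1" using p by (auto simp: field_simps)
  have r0: "0 \<le> r" and r1: "r \<le> 1" unfolding r_def using q0 q1 by (auto intro: power_le_one)
  have c0: "0 \<le> c \<pi>" for \<pi> by (simp add: c_def)
  have E0: "0 \<le> E \<pi> f" for \<pi> f by (simp add: E_def)
  have E1: "E \<pi> f \<le> 1" for \<pi> f by (simp add: E_def pmf_le_1)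
  have gi: "\<And>a. a \<in> F \<Longrightarrow> Gf n x y (Gf n x y a) = a" using Gf_inv[OF xy(1,2)] F_def by auto
  have gF: "\<And>a. a \<in> F \<Longrightarrow> Gf n x y a \<in> F" unfolding F_def by (simp add: Gf_def)
  have "err = (\<Sum>\<pi>\<in>P. \<Sum>f\<in>F. c (\<tau> \<circ> \<pi>) * W (Gf n x y f) * E (\<tau> \<circ> \<pi>) (Gf n x y f))"
  proof -
    have "(\<Sum>\<pi>\<in>P. \<Sum>f\<in>F. c \<pi> * W f * E \<pi> f) = (\<Sum>\<pi>\<in>P. \<Sum>f\<in>F. c (\<tau> \<circ> \<pi>) * W f * E (\<tau> \<circ> \<pi>) f)"
    proof (rule sum.reindex_bij_witness[of _ "\<lambda>\<pi>. \<tau> \<circ> \<pi>" "\<lambda>\<pi>. \<tau> \<circ> \<pi>"])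
      show "\<And>a. a \<in> P \<Longrightarrow> \<tau> \<circ> (\<tau> \<circ> a) = a" unfolding \<tau>_def by (simp add: comp_assoc[symmetric])
      show "\<And>a. a \<in> P \<Longrightarrow> \<tau> \<circ> a \<in> P" by (rule tauP)
    qed (use tauP in \<open>auto simp: \<tau>_def comp_assoc[symmetric]\<close>)
    also have "\<dots> = (\<Sum>\<pi>\<in>P. \<Sum>f\<in>F. c (\<tau> \<circ> \<pi>) * W (Gf n x y f) * E (\<tau> \<circ> \<pi>) (Gf n x y f))"
      by (rule sum.cong[OF refl], rule sum.reindex_bij_witness[of _ "Gf n x y" "Gf n x y"])
         (simp_all add: gi gF)
    finally show ?thesis using expand by simp
  qed
  also have "\<dots> = (\<Sum>\<pi>\<in>P. \<Sum>f\<in>F. c \<pi> * W (Gf n x y f) * (1 - E \<pi> f))"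
    by (intro sum.cong refl) (simp add: cP compl)
  also have "\<dots> \<ge> (\<Sum>\<pi>\<in>P. \<Sum>f\<in>F. r * (c \<pi> * W f) - r * (c \<pi> * W f * E \<pi> f))"
  proof (intro sum_mono)
    fix \<pi> f assume "\<pi> \<in> P" "f \<in> F"
    have "c \<pi> * (r * W f) * (1 - E \<pi> f) \<le> c \<pi> * W (Gf n x y f) * (1 - E \<pi> f)"
      using Wge[OF \<open>f \<in> F\<close>] c0 E1 by (intro mult_right_mono mult_left_mono) auto
    then show "r * (c \<pi> * W f) - r * (c \<pi> * W f * E \<pi> f) \<le> c \<pi> * W (Gf n x y f) * (1 - E \<pi> f)"
      by (simp add: algebra_simps)
  qed
  finally have "err \<ge> r * (\<Sum>\<pi>\<in>P. \<Sum>f\<in>F. c \<pi> * W f) - r * err"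
    using expand by (simp add: sum_subtractf sum_distrib_left)
  then have "err \<ge> r - r * err" using tot by simp
  moreover have "0 \<le> err" unfolding err_def error_prob_def by simp
  moreover have "r * err \<le> err" using \<open>0 \<le> err\<close> r0 r1 by (rule mult_left_le_one_le)
  ultimately have "2 * err \<ge> r" by linarith
  then show ?thesis unfolding err_def r_def by simp
qed

end
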